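(* Let $p$ be a polynomial of degree $m$ with $p(t)=dt^m+O(t^{m-1})$, let $q$ be a polynomial of degree $d\ge1$ with $q(t)=t^d+O(t^{d-1})$, let $c\in\mathbb{C}$, $g(z)=\int_0^zp(t)e^{q(t)}dt+c$, suppose $g$ is not of the form $\tilde p e^{\tilde q}$ with polynomials $\tilde p,\tilde q$, let $f(z)=z-g(z)/g'(z)$, and suppose each zero of $g''$ that is not a zero of $g$ or $g'$ is attracted by a periodic cycle of $f$. Then there is $\rho>0$ such that every zero $z_0$ of $g$ which is not a zero of $g'$ and satisfies $|z_0|>\rho$ has $$q(\mathcal{A}^*(z_0))\supset D\Big(q(z_0),\frac{1}{13}\Big).$$
   Context: $\mathcal{A}^*(z_0)$ denotes the immediate basin of attraction of the superattracting fixed point $z_0$ of $f$, i.e. the Fatou component of $f$ containing $z_0$. $D(z_0,r)$ is the open disk. *)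

theory Defs
  imports "HOL-Complex_Analysis.Complex_Analysis" "HOL-Computational_Algebra.Polynomial"
begin

text \<open>At common zeros of g and g' the singularity is removable with value z;
  at zeros of g' which are not zeros of g the map has a pole (value below irrelevant,
  such points are collected in newton_poles).\<close>
definition newton_map :: "(complex \<Rightarrow> complex) \<Rightarrow> complex \<Rightarrow> complex" where
  "newton_map g z = (if deriv g z = 0 then z else z - g z / deriv g z)"

definition newton_poles :: "(complex \<Rightarrow> complex) \<Rightarrow> complex set" where
  "newton_poles g = {z. deriv g z = 0 \<and> g z \<noteq> 0}"

definition normal_family :: "(nat \<Rightarrow> complex \<Rightarrow> complex) \<Rightarrow> complex set \<Rightarrow> bool" where
  "normal_family F U \<longleftrightarrow>
     (\<forall>s :: nat \<Rightarrow> nat. \<exists>r. strict_mono r \<and>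
        ((\<exists>\<phi>. \<forall>K. compact K \<and> K \<subseteq> U \<longrightarrow>
              uniform_limit K (\<lambda>k. F (s (r k))) \<phi> sequentially)
         \<or> (\<forall>K. compact K \<and> K \<subseteq> U \<longrightarrow>
              (\<forall>B. \<forall>\<^sub>F k in sequentially. \<forall>z\<in>K. B \<le> norm (F (s (r k)) z)))))"

text \<open>Fatou set of a meromorphic function f with pole set P: points having an open
  neighbourhood on which all iterates are defined (orbits avoid the poles) and form a
  normal family.\<close>
definition fatou_set :: "(complex \<Rightarrow> complex) \<Rightarrow> complex set \<Rightarrow> complex set" where
  "fatou_set f P = {z. \<exists>U. open U \<and> z \<in> U \<and>
      (\<forall>n. \<forall>w\<in>U. (f ^^ n) w \<notin> P) \<and> normal_family (\<lambda>n. f ^^ n) U}"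

definition immediate_basin :: "(complex \<Rightarrow> complex) \<Rightarrow> complex set \<Rightarrow> complex \<Rightarrow> complex set" where
  "immediate_basin f P z0 = connected_component_set (fatou_set f P) z0"

definition attracted_by_cycle :: "(complex \<Rightarrow> complex) \<Rightarrow> complex set \<Rightarrow> complex \<Rightarrow> bool" where
  "attracted_by_cycle f P w \<longleftrightarrow>
     (\<exists>k \<zeta>. k > 0 \<and> (f ^^ k) \<zeta> = \<zeta> \<and> (\<forall>j<k. (f ^^ j) \<zeta> \<notin> P) \<and>
        norm (deriv (f ^^ k) \<zeta>) < 1 \<and>
        (\<forall>n. (f ^^ n) w \<notin> P) \<and> (\<lambda>n. (f ^^ (n * k)) w) \<longlonglongrightarrow> \<zeta>)"

end

theory Submission
  imports Defs
begin

lemma prim_deriv: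
  fixes F :: "complex \<Rightarrow> complex"
  assumes hol: "F holomorphic_on UNIV"
  shows "((\<lambda>z. contour_integral (linepath 0 z) F) has_field_derivative F x) (at x)"
proof (rule triangle_contour_integrals_starlike_primitive[where S=UNIV and a=0])
  show "continuous_on UNIV F" using hol holomorphic_on_imp_continuous_on by blast
  fix b c :: complex
  have "(F has_contour_integral 0) (linepath 0 b +++ linepath b c +++ linepath c 0)"
    by (rule Cauchy_theorem_triangle_cofinite[where S="{}"])
       (use hol in \<open>auto intro: holomorphic_on_imp_continuous_on[THEN continuous_on_subset] holomorphic_on_imp_differentiable_at\<close>)
  then show "contour_integral (linepath 0 b) F + contour_integral (linepath b c) F + contour_integral (linepath c 0) F = 0"
    by (rule has_chain_integral_chain_integral3)
qed auto

lemma poly_upper: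
  fixes P :: "complex poly"
  assumes "degree P \<le> k"
  shows "\<exists>B>0. \<forall>t. 1 \<le> norm t \<longrightarrow> norm (poly P t) \<le> B * norm t ^ k"
proof -
  define S where "S = (\<Sum>i\<le>degree P. norm (coeff P i))"
  have S0: "S \<ge> 0" unfolding S_def by (simp add: sum_nonneg)
  show ?thesis
  proof (intro exI[of _ "S+1"] conjI allI impI)
    fix t :: complex assume t: "1 \<le> norm t"
    have "norm (poly P t) \<le> (\<Sum>i\<le>degree P. norm (coeff P i * t ^ i))"
      unfolding poly_altdef by (rule norm_sum)
    also have "\<dots> \<le> (\<Sum>i\<le>degree P. norm (coeff P i) * norm t ^ k)"
    proof (rule sum_mono)
      fix i assume "i \<in> {..degree P}"
      then have "i \<le> k" using assms by auto
      then have "norm t ^ i \<le> norm t ^ k" using t by (simp add: power_increasing)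
      then show "norm (coeff P i * t ^ i) \<le> norm (coeff P i) * norm t ^ k"
        by (simp add: norm_mult norm_power mult_left_mono)
    qed
    also have "\<dots> = S * norm t ^ k" by (simp add: S_def sum_distrib_right)
    also have "\<dots> \<le> (S+1) * norm t ^ k" using t by (simp add: mult_right_mono)
    finally show "norm (poly P t) \<le> (S + 1) * norm t ^ k" .
  qed (use S0 in auto)
qed

lemma poly_lower:
  fixes P :: "complex poly"
  assumes "degree P = k" "P \<noteq> 0"
  shows "\<exists>A>0. \<exists>R\<ge>1. \<forall>t. R \<le> norm t \<longrightarrow> A * norm t ^ k \<le> norm (poly P t)"
proof (cases k)
  case 0
  then obtain c where "P = [:c:]" using assms by (metis degree_eq_zeroE)
  with assms 0 show ?thesis by (intro exI[of _ "norm c"]) auto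
next
  case (Suc j)
  define c where "c = coeff P k"
  have c0: "c \<noteq> 0" using assms c_def by auto
  define S where "S = (\<Sum>i<k. norm (coeff P i))"
  have S0: "S \<ge> 0" unfolding S_def by (simp add: sum_nonneg)
  define R where "R = max 1 (2 * S / norm c)"
  have R1: "R \<ge> 1" unfolding R_def by auto
  have main: "\<forall>t. R \<le> norm t \<longrightarrow> norm c / 2 * norm t ^ Suc j \<le> norm (poly P t)"
  proof (intro allI impI)
    fix t :: complex assume tR: "R \<le> norm t"
    have t1: "1 \<le> norm t" using tR R_def by auto
    have tS: "2 * S \<le> norm c * norm t" using tR R_def c0
      by (auto simp: field_simps)
    have split: "poly P t = c * t ^ k + (\<Sum>i<k. coeff P i * t ^ i)"
      unfolding poly_altdef assms(1) c_def by (simp add: lessThan_Suc_atMost[symmetric] Suc)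
    have "norm (\<Sum>i<k. coeff P i * t ^ i) \<le> (\<Sum>i<k. norm (coeff P i) * norm t ^ j)"
    proof -
      have "norm (\<Sum>i<k. coeff P i * t ^ i) \<le> (\<Sum>i<k. norm (coeff P i * t ^ i))" by (rule norm_sum)
      also have "\<dots> \<le> (\<Sum>i<k. norm (coeff P i) * norm t ^ j)"
      proof (rule sum_mono)
        fix i assume "i \<in> {..<k}"
        then have "i \<le> j" using Suc by auto
        then have "norm t ^ i \<le> norm t ^ j" using t1 by (simp add: power_increasing)
        then show "norm (coeff P i * t ^ i) \<le> norm (coeff P i) * norm t ^ j"
          by (simp add: norm_mult norm_power mult_left_mono)
      qed
      finally show ?thesis .
    qed
    also have "\<dots> = S * norm t ^ j" by (simp add: S_def sum_distrib_right)
    finally have rest: "norm (\<Sum>i<k. coeff P i * t ^ i) \<le> S * norm t ^ j" .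
    have "norm (c * t ^ k) = norm c * norm t * norm t ^ j" by (simp add: Suc norm_mult norm_power)
    moreover have "2 * (S * norm t ^ j) \<le> norm c * norm t * norm t ^ j"
      using tS by (simp add: mult_right_mono mult.assoc[symmetric])
    ultimately have "norm c / 2 * norm t ^ k \<le> norm (c * t ^ k) - norm (\<Sum>i<k. coeff P i * t ^ i)"
      using rest by (simp add: Suc)
    also have "\<dots> \<le> norm (poly P t)" unfolding split by (metis norm_diff_ineq diff_minus_eq_add norm_minus_cancel)
    finally show "norm c / 2 * norm t ^ Suc j \<le> norm (poly P t)" by (simp add: Suc)
  qed
  show ?thesis apply (rule exI[of _ "norm c/2"]) using main c0 R1 Suc by auto
qed

lemma pderiv_upper:
  fixes P :: "complex poly"
  assumes "degree P \<le> k"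
  shows "\<exists>B>0. \<forall>t. 1 \<le> norm t \<longrightarrow> norm t * norm (poly (pderiv P) t) \<le> B * norm t ^ k"
proof (cases k)
  case 0
  then have "pderiv P = 0" using assms pderiv_eq_0_iff by auto
  then show ?thesis by (intro exI[of _ 1]) auto
next
  case (Suc j)
  have "degree (pderiv P) \<le> j" using assms Suc by (simp add: degree_pderiv)
  from poly_upper[OF this] obtain B where B: "B > 0" "\<And>t. 1 \<le> norm t \<Longrightarrow> norm (poly (pderiv P) t) \<le> B * norm t ^ j" by auto
  show ?thesis
  proof (intro exI[of _ B] conjI allI impI)
    fix t :: complex assume t: "1 \<le> norm t"
    have "norm t * norm (poly (pderiv P) t) \<le> norm t * (B * norm t ^ j)"
      using B(2)[OF t] by (simp add: mult_left_mono)
    then show "norm t * norm (poly (pderiv P) t) \<le> B * norm t ^ k" by (simp add: Suc algebra_simps)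
  qed (use B in auto)
qed


lemma fatou_sub:
  fixes f :: "complex \<Rightarrow> complex"
  assumes V: "open V" "bounded V" and hol: "f holomorphic_on V" and inv: "f ` V \<subseteq> V" and P: "V \<inter> P = {}"
  shows "V \<subseteq> fatou_set f P"
proof -
  have it: "(f ^^ n) ` V \<subseteq> V \<and> (f ^^ n) holomorphic_on V" for n
  proof (induction n)
    case 0
    then show ?case by (simp add: holomorphic_on_ident)
  next
    case (Suc n)
    then have "(f \<circ> f ^^ n) holomorphic_on V"
      by (intro holomorphic_on_compose_gen[OF _ hol]) auto
    moreover have "(f \<circ> f ^^ n) ` V \<subseteq> V" using Suc inv by (auto simp: image_subset_iff)
    ultimately show ?case by (simp add: o_def)
  qed
  obtain B where B: "\<And>x. x \<in> V \<Longrightarrow> norm x \<le> B" using V(2) by (meson bounded_iff)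
  have nf: "normal_family (\<lambda>n. f ^^ n) V"
    unfolding normal_family_def
  proof
    fix s :: "nat \<Rightarrow> nat"
    obtain gg r where r: "strict_mono (r :: nat \<Rightarrow> nat)"
      and ul: "\<And>K. \<lbrakk>compact K; K \<subseteq> V\<rbrakk> \<Longrightarrow> uniform_limit K ((\<lambda>k. f ^^ s k) \<circ> r) gg sequentially"
    proof (rule Montel[of V "{h. h holomorphic_on V \<and> h ` V \<subseteq> V}" "\<lambda>k. f ^^ s k"])
      show "open V" by (rule V(1))
      show "\<And>h. h \<in> {h. h holomorphic_on V \<and> h ` V \<subseteq> V} \<Longrightarrow> h holomorphic_on V" by auto
      show "\<And>K. compact K \<Longrightarrow> K \<subseteq> V \<Longrightarrow> \<exists>B. \<forall>h\<in>{h. h holomorphic_on V \<and> h ` V \<subseteq> V}. \<forall>z\<in>K. norm (h z) \<le> B"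
        using B by (intro exI[of _ B]) blast
      show "range (\<lambda>k. f ^^ s k) \<subseteq> {h. h holomorphic_on V \<and> h ` V \<subseteq> V}" using it by auto
    qed auto
    show "\<exists>r. strict_mono r \<and>
        ((\<exists>\<phi>. \<forall>K. compact K \<and> K \<subseteq> V \<longrightarrow> uniform_limit K (\<lambda>k. (f ^^ s (r k))) \<phi> sequentially) \<or>
         (\<forall>K. compact K \<and> K \<subseteq> V \<longrightarrow> (\<forall>B. \<forall>\<^sub>F k in sequentially. \<forall>z\<in>K. B \<le> norm ((f ^^ s (r k)) z))))"
      using r ul by (intro exI[of _ r] conjI disjI1 exI[of _ gg]) (auto simp: o_def)
  qed
  show ?thesis
  proof
    fix z assume z: "z \<in> V"
    show "z \<in> fatou_set f P" unfolding fatou_set_def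
      using z V(1) nf it P by (intro CollectI exI[of _ V]) blast
  qed
qed

context
  fixes p q :: "complex poly" and g :: "complex \<Rightarrow> complex" and z0 a :: complex
  assumes gder: "\<And>z. (g has_field_derivative poly p z * exp (poly q z)) (at z)"
    and gz0: "g z0 = 0"
    and a_def: "a = poly (pderiv q) z0"
    and anz: "a \<noteq> 0"
    and C1: "\<And>t. t \<in> cball z0 (2 / norm a) \<Longrightarrow> norm (poly (pderiv (pderiv q)) t) \<le> 1/100 * norm a ^ 2"
    and C2: "\<And>t. t \<in> cball z0 (2 / norm a) \<Longrightarrow> poly p t \<noteq> 0 \<and> poly (pderiv q) t \<noteq> 0"
    and C3: "\<And>t s. t \<in> cball z0 (2 / norm a) \<Longrightarrow> s \<in> cball z0 (2 / norm a) \<Longrightarrow>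
      norm ((poly (pderiv p) t * poly (pderiv q) t - poly p t * poly (pderiv (pderiv q)) t) / (poly (pderiv q) t)^2)
        \<le> 1/100 * norm a * norm (poly p s / poly (pderiv q) s)"
begin

lemma L_taylor:
  assumes x: "x \<in> cball z0 (2 / norm a)" and y: "y \<in> cball z0 (2 / norm a)"
  shows "norm (poly q y - poly q x - poly (pderiv q) x * (y - x)) \<le> 1/100 * norm a ^ 2 * norm (y - x) ^ 2"
proof -
  define F where "F i = poly ((pderiv ^^ i) q)" for i
  have "norm (F 0 y - (\<Sum>i\<le>1. F i x * (y - x) ^ i / fact i)) \<le> 1/100 * norm a ^ 2 * norm (y - x) ^ Suc 1 / fact 1"
  proof (rule complex_Taylor[of "cball z0 (2 / norm a)"])
    fix i and t assume "t \<in> cball z0 (2 / norm a)"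
    show "(F i has_field_derivative F (Suc i) t) (at t within cball z0 (2 / norm a))"
      unfolding F_def by (auto intro: DERIV_subset poly_DERIV)
  next
    fix t assume "t \<in> cball z0 (2 / norm a)"
    then show "norm (F (Suc 1) t) \<le> 1/100 * norm a ^ 2" using C1 by (simp add: F_def numeral_2_eq_2)
  qed (use x y in auto)
  then show ?thesis by (simp add: F_def power2_eq_square diff_diff_eq)
qed

lemma L_q1:
  assumes x: "x \<in> cball z0 (2 / norm a)"
  shows "norm (poly (pderiv q) x - a) \<le> 1/100 * norm a ^ 2 * norm (x - z0)"
proof -
  have "norm (poly (pderiv q) x - poly (pderiv q) z0) \<le> 1/100 * norm a ^ 2 * norm (x - z0)"
  proof (rule field_differentiable_bound[of "cball z0 (2 / norm a)"])
    fix t assume "t \<in> cball z0 (2 / norm a)"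
    show "(poly (pderiv q) has_field_derivative poly (pderiv (pderiv q)) t) (at t within cball z0 (2 / norm a))"
      by (auto intro: DERIV_subset poly_DERIV)
  qed (use x C1 anz in auto)
  then show ?thesis by (simp add: a_def)
qed

abbreviation H where "H t \<equiv> poly p t / poly (pderiv q) t"
abbreviation H' where "H' t \<equiv> (poly (pderiv p) t * poly (pderiv q) t - poly p t * poly (pderiv (pderiv q)) t) / (poly (pderiv q) t)^2"

lemma L_Hderiv:
  assumes t: "t \<in> cball z0 (2 / norm a)"
  shows "((\<lambda>t. H t) has_field_derivative H' t) (at t)"
proof -
  have "poly (pderiv q) t \<noteq> 0" using C2[OF t] by auto
  from DERIV_divide[OF poly_DERIV poly_DERIV this]
  show ?thesis by (simp add: power2_eq_square)
qed

lemma L_H: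
  assumes z: "z \<in> cball z0 (2 / norm a)"
  shows "norm (H z - H z0) \<le> 1/100 * norm a * norm (H z) * norm (z - z0)"
proof (rule field_differentiable_bound[of "cball z0 (2 / norm a)"])
  fix t assume t: "t \<in> cball z0 (2 / norm a)"
  show "((\<lambda>t. H t) has_field_derivative H' t) (at t within cball z0 (2 / norm a))"
    using L_Hderiv[OF t] by (rule DERIV_subset) auto
  show "norm (H' t) \<le> 1/100 * norm a * norm (H z)" using C3[OF t z] .
qed (use z anz in auto)

lemma cball_sub: "cball z0 (1 / norm a) \<subseteq> cball z0 (2 / norm a)"
  using anz by (intro subset_cball) (auto simp: field_simps)

lemma L_qb:
  assumes t: "t \<in> cball z0 (1 / norm a)"
  shows "norm (poly q t - poly q z0) \<le> 101/100"
proof -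
  have t2: "t \<in> cball z0 (2 / norm a)" using t cball_sub by auto
  have z2: "z0 \<in> cball z0 (2 / norm a)" using anz by auto
  have d: "norm (t - z0) \<le> 1 / norm a" using t by (simp add: dist_norm norm_minus_commute)
  have na: "norm a > 0" using anz by auto
  have ad: "norm a * norm (t - z0) \<le> 1" using d na by (simp add: field_simps)
  have T: "norm (poly q t - poly q z0 - a * (t - z0)) \<le> 1/100 * norm a ^ 2 * norm (t - z0) ^ 2"
    using L_taylor[OF z2 t2] a_def by simp
  have sq: "norm a ^ 2 * norm (t - z0) ^ 2 \<le> 1"
    using ad by (metis mult_nonneg_nonneg norm_ge_zero power_le_one power_mult_distrib)
  have "norm (poly q t - poly q z0) \<le> norm (a * (t - z0)) + norm (poly q t - poly q z0 - a * (t - z0))"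
    by (metis add.commute diff_add_cancel norm_triangle_ineq)
  also have "\<dots> \<le> 1 + 1/100" using T sq ad by (simp add: norm_mult)
  finally show ?thesis by simp
qed

lemma norm_exp_le: "norm (exp (x::complex)) \<le> norm (exp y) * exp (norm (x - y))"
proof -
  have "norm (exp x) = exp (Re x)" by (simp add: norm_exp_eq_Re)
  also have "exp (Re x) = exp (Re y) * exp (Re (x - y))" by (simp add: exp_add[symmetric])
  also have "\<dots> \<le> exp (Re y) * exp (norm (x - y))" using complex_Re_le_cmod[of "x-y"] by auto
  finally show ?thesis by (simp add: norm_exp_eq_Re)
qed

lemma L_Phi:
  assumes z: "z \<in> cball z0 (1 / norm a)"
  shows "norm (g z - H z * exp (poly q z) - (g z0 - H z0 * exp (poly q z0)))
     \<le> 1/100 * norm a * norm (H z) * (norm (exp (poly q z0)) * exp (101/100)) * norm (z - z0)"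
proof (rule field_differentiable_bound[of "cball z0 (1 / norm a)" "\<lambda>t. g t - H t * exp (poly q t)" "\<lambda>t. - (H' t * exp (poly q t))"])
  fix t assume t: "t \<in> cball z0 (1 / norm a)"
  have t2: "t \<in> cball z0 (2 / norm a)" using t cball_sub by auto
  have z2: "z \<in> cball z0 (2 / norm a)" using z cball_sub by auto
  have q0: "poly (pderiv q) t \<noteq> 0" using C2[OF t2] by auto
  have "((\<lambda>t. g t - H t * exp (poly q t)) has_field_derivative
      poly p t * exp (poly q t) - (H' t * exp (poly q t) + exp (poly q t) * poly (pderiv q) t * H t)) (at t)"
  proof -
    have e: "((\<lambda>t. exp (poly q t)) has_field_derivative exp (poly q t) * poly (pderiv q) t) (at t)"
      by (rule DERIV_chain2[OF DERIV_exp poly_DERIV])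
    show ?thesis by (rule DERIV_diff[OF gder DERIV_mult[OF L_Hderiv[OF t2] e]])
  qed
  moreover have "poly p t * exp (poly q t) - (H' t * exp (poly q t) + exp (poly q t) * poly (pderiv q) t * H t)
     = - (H' t * exp (poly q t))" using q0 by (simp add: field_simps)
  ultimately show "((\<lambda>t. g t - H t * exp (poly q t)) has_field_derivative - (H' t * exp (poly q t))) (at t within cball z0 (1 / norm a))"
    by (auto intro: DERIV_subset)
  have e1: "norm (exp (poly q t)) \<le> norm (exp (poly q z0)) * exp (101/100)"
    using norm_exp_le[of "poly q t" "poly q z0"] L_qb[OF t]
    by (meson exp_le_cancel_iff mult_left_mono norm_ge_zero order_trans)
  have h1: "norm (H' t) \<le> 1/100 * norm a * norm (H z)" using C3[OF t2 z2] .
  show "norm (- (H' t * exp (poly q t))) \<le> 1/100 * norm a * norm (H z) * (norm (exp (poly q z0)) * exp (101/100))"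
    unfolding norm_minus_cancel norm_mult by (rule mult_mono[OF h1 e1]) auto
qed (use z anz in auto)

lemma exp_13: "exp (1/13::real) \<le> 109/100"
proof -
  have "exp (1/13::real) \<le> 1 + 1/13 + (1/13)^2" by (rule exp_bound) auto
  moreover have "1 + 1/13 + (1/13::real)^2 \<le> 109/100" by (simp add: power2_eq_square)
  ultimately show ?thesis by linarith
qed

lemma exp_101: "exp (101/100::real) \<le> 304/100"
proof -
  have "exp (1/100::real) \<le> 1 + 1/100 + (1/100)^2" by (rule exp_bound) auto
  moreover have "exp (101/100::real) = exp 1 * exp (1/100)" by (simp add: exp_add[symmetric])
  moreover have "exp 1 * exp (1/100::real) \<le> 3 * (1 + 1/100 + (1/100)^2)"
    by (rule mult_mono) (use exp_le \<open>exp (1/100::real) \<le> 1 + 1/100 + (1/100)^2\<close> in auto)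
  moreover have "3 * (1 + 1/100 + (1/100::real)^2) \<le> 304/100" by (simp add: power2_eq_square)
  ultimately show ?thesis by linarith
qed

lemma exp_taylor1:
  assumes "norm (u::complex) \<le> 1/13"
  shows "norm (exp (-u) - 1 + u) \<le> 109/100 * norm u ^ 2"
proof -
  have "norm (exp (-u) - (\<Sum>i\<le>1. exp 0 * (-u - 0) ^ i / fact i)) \<le> exp (1/13) * norm (-u - 0) ^ Suc 1 / fact 1"
  proof (rule complex_Taylor[of "cball 0 (1/13)" 1 "\<lambda>i. exp"])
    fix x :: complex assume "x \<in> cball 0 (1/13)"
    then have "norm x \<le> 1/13" by simp
    then show "norm (exp x) \<le> exp (1/13)" using norm_exp_le[of x 0] by simp
  qed (use assms in \<open>auto intro: DERIV_subset DERIV_exp\<close>)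
  moreover have "exp (-u) - (1 - u) = exp (-u) - 1 + u" by simp
  ultimately have "norm (exp (-u) - 1 + u) \<le> exp (1/13) * norm u ^ 2" by (simp add: power2_eq_square)
  also have "\<dots> \<le> 109/100 * norm u ^ 2" using exp_13 by (intro mult_right_mono) auto
  finally show ?thesis .
qed

lemma div_le: fixes x y :: complex assumes "norm x \<le> c * norm y" "y \<noteq> 0" shows "norm (x / y) \<le> c"
  using assms by (simp add: norm_divide divide_le_eq)

lemma L_inv:
  assumes z: "norm (z - z0) < 1 / norm a" and u: "norm (poly q z - poly q z0) < 1/13"
  defines "z' \<equiv> z - g z / (poly p z * exp (poly q z))"
  shows "norm (z' - z0) < 1 / norm a \<and> norm (poly q z' - poly q z0) < 1/13"
proof -
  have na: "norm a > 0" using anz by auto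
  have zK1: "z \<in> cball z0 (1 / norm a)" using z by (simp add: dist_norm norm_minus_commute)
  then have zK: "z \<in> cball z0 (2 / norm a)" using cball_sub by auto
  have z0K: "z0 \<in> cball z0 (2 / norm a)" using na by auto
  have az: "norm a * norm (z - z0) \<le> 1" using z na by (simp add: field_simps)
  have hz: "H z \<noteq> 0" and bz: "poly (pderiv q) z \<noteq> 0" and pz: "poly p z \<noteq> 0" using C2[OF zK] by auto
  define w0 where "w0 = poly q z0"
  define uu where "uu = poly q z - w0"
  define e0 where "e0 = exp w0"
  define ez where "ez = exp (poly q z)"
  define b where "b = poly (pderiv q) z"
  define E where "E = g z - H z * ez - (g z0 - H z0 * e0)"
  have ez0: "ez \<noteq> 0" "e0 \<noteq> 0" by (auto simp: ez_def e0_def)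
  have uu: "norm uu < 1/13" using u by (simp add: uu_def w0_def)
  have gz: "g z = H z * ez - H z0 * e0 + E" using gz0 by (simp add: E_def)
  have Eb: "norm E \<le> 1/100 * norm a * norm (H z) * (norm e0 * exp (101/100)) * norm (z - z0)"
    using L_Phi[OF zK1] by (simp add: E_def ez_def e0_def w0_def)
  also have "\<dots> = 1/100 * norm (H z) * (norm e0 * exp (101/100)) * (norm a * norm (z - z0))" by simp
  also have "\<dots> \<le> 1/100 * norm (H z) * (norm e0 * exp (101/100))"
    using az by (simp add: mult_left_le)
  finally have Eb: "norm E \<le> 1/100 * norm (H z) * (norm e0 * exp (101/100))" .
  have e0b: "norm e0 \<le> norm ez * exp (norm uu)"
    using norm_exp_le[of w0 "poly q z"] by (simp add: e0_def ez_def uu_def norm_minus_commute)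
  have euu: "exp (norm uu) \<le> 109/100" using uu exp_13 by (meson exp_le_cancel_iff less_imp_le order_trans)
  have "norm (exp (-uu)) \<le> exp (norm uu)" using norm_exp_le[of "-uu" 0] by simp
  then have emu: "norm (exp (-uu)) \<le> 109/100" using euu by linarith
  have Hb: "norm (H z - H z0) \<le> 1/100 * norm (H z)"
  proof -
    have "norm (H z - H z0) \<le> 1/100 * norm a * norm (H z) * norm (z - z0)" by (rule L_H[OF zK])
    also have "\<dots> = 1/100 * norm (H z) * (norm a * norm (z - z0))" by simp
    also have "\<dots> \<le> 1/100 * norm (H z)" using az by (simp add: mult_left_le)
    finally show ?thesis .
  qed
  define X where "X = g z / (H z * ez)"
  define \<eta> where "\<eta> = exp (-uu) * ((H z - H z0) / H z) + E / (H z * ez)"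
  have emu_eq: "exp (-uu) = e0 / ez" by (simp add: uu_def e0_def ez_def exp_diff[symmetric])
  have Xeq: "X = 1 - exp (-uu) + \<eta>"
    unfolding X_def \<eta>_def emu_eq gz using hz ez0 by (simp add: field_simps)
  have eta1: "norm (exp (-uu) * ((H z - H z0) / H z)) \<le> 109/100 * (1/100)"
  proof -
    have "norm ((H z - H z0) / H z) \<le> 1/100" using div_le[OF Hb hz] .
    then show ?thesis unfolding norm_mult by (intro mult_mono[OF emu]) auto
  qed
  have eta2: "norm (E / (H z * ez)) \<le> 1/100 * (304/100) * (109/100)"
  proof -
    have "norm E \<le> 1/100 * norm (H z) * (norm ez * exp (norm uu) * exp (101/100))"
      using Eb e0b by (smt (verit, best) exp_gt_zero mult_left_mono mult_right_mono norm_ge_zero zero_le_divide_iff zero_le_mult_iff)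
    also have "\<dots> = (norm (H z) * norm ez) * (1/100 * exp (101/100) * exp (norm uu))" by simp
    also have "\<dots> \<le> (norm (H z) * norm ez) * (1/100 * (304/100) * (109/100))"
    proof -
      have pr: "1/100 * exp (101/100) * exp (norm uu) \<le> 1/100 * (304/100) * (109/100::real)"
        using mult_mono[OF exp_101 euu] by (simp add: mult.commute)
      show ?thesis by (rule mult_left_mono[OF pr]) simp
    qed
    finally have "norm E \<le> (1/100 * (304/100) * (109/100)) * norm (H z * ez)"
      unfolding norm_mult by (simp only: mult.commute)
    then show ?thesis by (rule div_le) (use hz ez0 in simp)
  qed
  have etab: "norm \<eta> \<le> 45/1000"
  proof -
    have "norm \<eta> \<le> 109/100 * (1/100) + 1/100 * (304/100) * (109/100)"
      unfolding \<eta>_def using eta1 eta2 norm_triangle_le by (metis add_mono)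
    then show ?thesis by simp
  qed
  define N where "N = exp (-uu) - 1 + uu"
  have Nb: "norm N \<le> 65/10000"
  proof -
    have "norm N \<le> 109/100 * norm uu ^ 2" unfolding N_def by (rule exp_taylor1) (use uu in auto)
    also have "\<dots> \<le> 109/100 * (1/13)^2" using uu by (intro mult_left_mono power_mono) auto
    finally show ?thesis by (simp add: power2_eq_square)
  qed
  have XN: "X = uu - N + \<eta>" using Xeq by (simp add: N_def)
  have Xb: "norm X \<le> 129/1000"
  proof -
    have "norm X \<le> norm (uu - N) + norm \<eta>" unfolding XN by (rule norm_triangle_ineq)
    moreover have "norm (uu - N) \<le> norm uu + norm N" by (rule norm_triangle_ineq4)
    ultimately have "norm X \<le> norm uu + norm N + norm \<eta>" by linarith
    then show ?thesis using uu Nb etab by simp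
  qed
  have bab: "norm (b - a) \<le> norm a / 100"
  proof -
    have "norm (b - a) \<le> 1/100 * norm a ^ 2 * norm (z - z0)" unfolding b_def by (rule L_q1[OF zK])
    also have "\<dots> = 1/100 * norm a * (norm a * norm (z - z0))" by (simp add: power2_eq_square)
    also have "\<dots> \<le> 1/100 * norm a" using az na by (simp add: mult_left_le)
    finally show ?thesis by simp
  qed
  have bb: "norm b \<ge> 99/100 * norm a" using bab norm_triangle_ineq2[of a b] by (simp add: norm_minus_commute) 
  define \<delta> where "\<delta> = X / b"
  have z'eq: "z' = z - \<delta>" unfolding z'_def \<delta>_def X_def b_def using hz bz by (simp add: field_simps ez_def)
  have db: "norm a * norm \<delta> \<le> 14/100"
  proof -
    have "norm \<delta> * (99/100 * norm a) \<le> norm \<delta> * norm b" using bb by (intro mult_left_mono) auto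
    also have "\<dots> = norm X" unfolding \<delta>_def using bz by (simp add: norm_divide b_def)
    finally have "norm \<delta> * (99/100 * norm a) \<le> 129/1000" using Xb by simp
    then show ?thesis by (simp add: algebra_simps)
  qed
  have z'z0: "norm a * norm (z' - z0) \<le> 114/100"
  proof -
    have e: "z' - z0 = (z - z0) - \<delta>" unfolding z'eq by simp
    have "norm (z' - z0) \<le> norm (z - z0) + norm \<delta>" unfolding e by (rule norm_triangle_ineq4)
    then have "norm a * norm (z' - z0) \<le> norm a * norm (z - z0) + norm a * norm \<delta>"
      using na by (simp add: distrib_left[symmetric] mult_left_mono)
    then show ?thesis using az db by simp
  qed
  have z'K: "z' \<in> cball z0 (2 / norm a)"
    using z'z0 na by (simp add: dist_norm norm_minus_commute field_simps)
  have T1: "norm (poly q z' - poly q z - b * (z' - z)) \<le> 1/100 * norm a ^ 2 * norm (z' - z) ^ 2"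
    unfolding b_def by (rule L_taylor[OF zK z'K])
  have "norm a ^ 2 * norm (z' - z) ^ 2 = (norm a * norm \<delta>) ^ 2" by (simp add: z'eq power_mult_distrib)
  also have "\<dots> \<le> (14/100)^2" using db by (intro power_mono) auto
  finally have T1': "norm (poly q z' - poly q z - b * (z' - z)) \<le> 1/100 * (14/100)^2" using T1 by simp
  have bd: "b * (z' - z) = - X" unfolding z'eq \<delta>_def using bz by (simp add: b_def)
  have qz'eq: "poly q z' - w0 = N - \<eta> + (poly q z' - poly q z - b * (z' - z))"
    unfolding bd XN uu_def by simp
  have qz'b: "norm (poly q z' - w0) \<le> 52/1000"
  proof -
    have "norm (poly q z' - w0) \<le> norm N + norm \<eta> + norm (poly q z' - poly q z - b * (z' - z))"
    proof -
      have "norm (N - \<eta> + (poly q z' - poly q z - b * (z' - z))) \<le> norm (N - \<eta>) + norm (poly q z' - poly q z - b * (z' - z))"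
        by (rule norm_triangle_ineq)
      moreover have "norm (N - \<eta>) \<le> norm N + norm \<eta>" by (rule norm_triangle_ineq4)
      ultimately show ?thesis unfolding qz'eq by linarith
    qed
    then show ?thesis using Nb etab T1' by (simp add: power2_eq_square)
  qed
  have T2: "norm (poly q z' - poly q z0 - a * (z' - z0)) \<le> 1/100 * norm a ^ 2 * norm (z' - z0) ^ 2"
    using L_taylor[OF z0K z'K] a_def by simp
  have "norm a ^ 2 * norm (z' - z0) ^ 2 = (norm a * norm (z' - z0)) ^ 2" by (simp add: power_mult_distrib)
  also have "\<dots> \<le> (114/100)^2" using z'z0 by (intro power_mono) auto
  finally have T2': "norm (poly q z' - poly q z0 - a * (z' - z0)) \<le> 1/100 * (114/100)^2" using T2 by simp
  have "norm (a * (z' - z0)) \<le> norm (poly q z' - poly q z0) + norm (poly q z' - poly q z0 - a * (z' - z0))"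
  proof -
    have "a * (z' - z0) = (poly q z' - poly q z0) - (poly q z' - poly q z0 - a * (z' - z0))" by simp
    then show ?thesis using norm_triangle_ineq4 by metis
  qed
  then have "norm a * norm (z' - z0) < 1" using qz'b T2' by (simp add: norm_mult w0_def power2_eq_square)
  then have "norm (z' - z0) < 1 / norm a" using na by (simp add: field_simps)
  moreover have "norm (poly q z' - poly q z0) < 1/13" using qz'b by (simp add: w0_def)
  ultimately show ?thesis by simp
qed

lemma cball_half: "cball z0 (1 / (2 * norm a)) \<subseteq> cball z0 (2 / norm a)"
  using anz by (intro subset_cball) (auto simp: field_simps)

lemma L_lip:
  assumes x: "x \<in> cball z0 (1 / (2 * norm a))" and y: "y \<in> cball z0 (1 / (2 * norm a))"
  shows "norm (poly q x - a * x - (poly q y - a * y)) \<le> 1/200 * norm a * norm (x - y)"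
proof (rule field_differentiable_bound[of "cball z0 (1 / (2 * norm a))" "\<lambda>t. poly q t - a * t" "\<lambda>t. poly (pderiv q) t - a"])
  fix t assume t: "t \<in> cball z0 (1 / (2 * norm a))"
  show "((\<lambda>t. poly q t - a * t) has_field_derivative poly (pderiv q) t - a) (at t within cball z0 (1 / (2 * norm a)))"
    by (auto intro!: derivative_eq_intros DERIV_subset[OF poly_DERIV])
  have t2: "t \<in> cball z0 (2 / norm a)" using t cball_half by auto
  have "norm (poly (pderiv q) t - a) \<le> 1/100 * norm a ^ 2 * norm (t - z0)" by (rule L_q1[OF t2])
  also have "\<dots> \<le> 1/100 * norm a ^ 2 * (1 / (2 * norm a))"
    using t by (intro mult_left_mono) (auto simp: dist_norm norm_minus_commute)
  also have "\<dots> = 1/200 * norm a" using anz by (simp add: power2_eq_square field_simps)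
  finally show "norm (poly (pderiv q) t - a) \<le> 1/200 * norm a" .
qed (use x y in auto)

lemma L_pre_lip:
  assumes x: "x \<in> cball z0 (1 / (2 * norm a))" and y: "y \<in> cball z0 (1 / (2 * norm a))"
  shows "norm (x - y) \<le> 2 / norm a * norm (poly q x - poly q y)"
proof -
  have na: "norm a > 0" using anz by auto
  have "a * (x - y) = (poly q x - poly q y) - (poly q x - a * x - (poly q y - a * y))" by (simp add: algebra_simps)
  then have "norm a * norm (x - y) \<le> norm (poly q x - poly q y) + norm (poly q x - a * x - (poly q y - a * y))"
    by (metis norm_mult norm_triangle_ineq4)
  then have "norm a * norm (x - y) \<le> norm (poly q x - poly q y) + 1/200 * norm a * norm (x - y)"
    using L_lip[OF x y] by linarith
  then have "norm a * norm (x - y) \<le> 2 * norm (poly q x - poly q y)"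
    using mult_nonneg_nonneg[OF norm_ge_zero norm_ge_zero, of a "x - y"] by linarith
  then show ?thesis using na by (simp add: field_simps)
qed

lemma L_exists:
  assumes w: "norm (w - poly q z0) < 1/13"
  shows "\<exists>z \<in> cball z0 (1 / (2 * norm a)). poly q z = w"
proof -
  have na: "norm a > 0" using anz by auto
  define C where "C = cball z0 (1 / (2 * norm a))"
  define T where "T z = z - (poly q z - w) / a" for z
  have "\<exists>!x\<in>C. T x = x"
  proof (rule Banach_fix[of C "1/200"])
    show "complete C" unfolding C_def by (rule compact_imp_complete) simp
    show "C \<noteq> {}" unfolding C_def using na by simp
    show "T ` C \<subseteq> C"
    proof
      fix y assume "y \<in> T ` C"
      then obtain x where x: "x \<in> C" and y: "y = T x" by auto
      have x2: "x \<in> cball z0 (2 / norm a)" using x cball_half C_def by auto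
      have z02: "z0 \<in> cball z0 (2 / norm a)" using na by simp
      have xd: "norm (x - z0) \<le> 1 / (2 * norm a)" using x C_def by (simp add: dist_norm norm_minus_commute)
      have eqT: "T x - z0 = ((w - poly q z0) - (poly q x - poly q z0 - a * (x - z0))) / a"
        unfolding T_def using anz by (simp add: field_simps)
      have "norm (T x - z0) \<le> (norm (w - poly q z0) + norm (poly q x - poly q z0 - a * (x - z0))) / norm a"
        unfolding eqT norm_divide by (intro divide_right_mono norm_triangle_ineq4) simp
      also have "norm (poly q x - poly q z0 - a * (x - z0)) \<le> 1/100 * norm a ^ 2 * norm (x - z0) ^ 2"
        using L_taylor[OF z02 x2] a_def by simp
      also have "\<dots> \<le> 1/100 * norm a ^ 2 * (1 / (2 * norm a)) ^ 2"
        using xd by (intro mult_left_mono power_mono) auto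
      also have "\<dots> = 1/400" using na by (simp add: power2_eq_square field_simps)
      finally have "norm (T x - z0) \<le> (norm (w - poly q z0) + 1/400) / norm a" using na by (simp add: divide_right_mono)
      also have "\<dots> \<le> (1/13 + 1/400) / norm a" using w na by (intro divide_right_mono) auto
      also have "\<dots> \<le> 1 / (2 * norm a)" using na by (simp add: field_simps)
      finally show "y \<in> C" unfolding C_def y by (simp add: dist_norm norm_minus_commute)
    qed
    fix x y assume x: "x \<in> C" and y: "y \<in> C"
    have "T x - T y = - (poly q x - a * x - (poly q y - a * y)) / a"
      unfolding T_def using anz by (simp add: field_simps)
    then have "dist (T x) (T y) = norm (- (poly q x - a * x - (poly q y - a * y))) / norm a"
      by (simp only: dist_norm norm_divide)
    also have "\<dots> = norm (poly q x - a * x - (poly q y - a * y)) / norm a" by (simp only: norm_minus_cancel)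
    also have "\<dots> \<le> (1/200 * norm a * norm (x - y)) / norm a"
      using L_lip[OF x[unfolded C_def] y[unfolded C_def]] na by (intro divide_right_mono) auto
    also have "\<dots> = 1/200 * dist x y" using na by (simp add: dist_norm)
    finally show "dist (T x) (T y) \<le> 1/200 * dist x y" .
  qed auto
  then obtain x where x: "x \<in> C" "T x = x" by auto
  then have "poly q x = w" unfolding T_def using anz by simp
  then show ?thesis using x C_def by auto
qed

lemma L_U:
  "\<exists>U. connected U \<and> z0 \<in> U \<and> U \<subseteq> {z. norm (z - z0) < 1 / norm a \<and> norm (poly q z - poly q z0) < 1/13}
     \<and> ball (poly q z0) (1/13) \<subseteq> poly q ` U"
proof -
  have na: "norm a > 0" using anz by auto
  define C where "C = cball z0 (1 / (2 * norm a))"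
  have "\<forall>w\<in>ball (poly q z0) (1/13). \<exists>z\<in>C. poly q z = w"
    using L_exists unfolding C_def by (simp add: dist_norm norm_minus_commute)
  then obtain \<psi> where \<psi>: "\<And>w. w \<in> ball (poly q z0) (1/13) \<Longrightarrow> \<psi> w \<in> C \<and> poly q (\<psi> w) = w"
    by metis
  have lip: "(2 / norm a)-lipschitz_on (ball (poly q z0) (1/13)) \<psi>"
  proof (rule lipschitz_onI)
    fix x y assume x: "x \<in> ball (poly q z0) (1/13)" and y: "y \<in> ball (poly q z0) (1/13)"
    show "dist (\<psi> x) (\<psi> y) \<le> 2 / norm a * dist x y"
      using L_pre_lip[of "\<psi> x" "\<psi> y"] \<psi>[OF x] \<psi>[OF y] C_def by (simp add: dist_norm)
  qed (use na in simp)
  have z0C: "z0 \<in> C" using na C_def by simp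
  have w0: "poly q z0 \<in> ball (poly q z0) (1/13)" by simp
  have "norm (\<psi> (poly q z0) - z0) \<le> 2 / norm a * norm (poly q (\<psi> (poly q z0)) - poly q z0)"
    using L_pre_lip[of "\<psi> (poly q z0)" z0] \<psi>[OF w0] z0C C_def by simp
  then have psi0: "\<psi> (poly q z0) = z0" using \<psi>[OF w0] by simp
  show ?thesis
  proof (intro exI[of _ "\<psi> ` ball (poly q z0) (1/13)"] conjI)
    show "connected (\<psi> ` ball (poly q z0) (1/13))"
      by (rule connected_continuous_image[OF lipschitz_on_continuous_on[OF lip]]) simp
    show "z0 \<in> \<psi> ` ball (poly q z0) (1/13)" by (rule image_eqI[of _ \<psi> "poly q z0"]) (use psi0 in auto)
    show "\<psi> ` ball (poly q z0) (1/13) \<subseteq> {z. norm (z - z0) < 1 / norm a \<and> norm (poly q z - poly q z0) < 1/13}"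
    proof clarify
      fix w assume w: "w \<in> ball (poly q z0) (1/13)"
      have "norm (\<psi> w - z0) \<le> 1 / (2 * norm a)" using \<psi>[OF w] C_def by (simp add: dist_norm norm_minus_commute)
      also have "\<dots> < 1 / norm a" using na by (simp add: field_simps)
      finally show "norm (\<psi> w - z0) < 1 / norm a \<and> norm (poly q (\<psi> w) - poly q z0) < 1/13"
        using \<psi>[OF w] w by (simp add: dist_norm norm_minus_commute)
    qed
    show "ball (poly q z0) (1/13) \<subseteq> poly q ` \<psi> ` ball (poly q z0) (1/13)"
    proof
      fix w assume w: "w \<in> ball (poly q z0) (1/13)"
      then have "w = poly q (\<psi> w)" using \<psi> by auto
      then show "w \<in> poly q ` \<psi> ` ball (poly q z0) (1/13)" using w by blast
    qed
  qed
qed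

lemma key: "ball (poly q z0) (1/13) \<subseteq> poly q ` immediate_basin (newton_map g) (newton_poles g) z0"
proof -
  have na: "norm a > 0" using anz by auto
  define V where "V = {z. norm (z - z0) < 1 / norm a \<and> norm (poly q z - poly q z0) < 1/13}"
  have dg: "deriv g z = poly p z * exp (poly q z)" for z using gder DERIV_imp_deriv by blast
  have VK: "z \<in> cball z0 (2 / norm a)" if "z \<in> V" for z
  proof -
    have "norm (z - z0) < 1 / norm a" using that V_def by auto
    also have "\<dots> \<le> 2 / norm a" using na by (simp add: field_simps)
    finally show ?thesis by (simp add: dist_norm norm_minus_commute)
  qed
  have pV: "poly p z \<noteq> 0" if "z \<in> V" for z using C2[OF VK[OF that]] by auto
  have nm: "newton_map g z = z - g z / (poly p z * exp (poly q z))" if "z \<in> V" for z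
    using pV[OF that] by (simp add: newton_map_def dg)
  have openV: "open V" unfolding V_def
    by (intro open_Collect_conj open_Collect_less continuous_intros)
  have bddV: "bounded V" by (rule bounded_subset[OF bounded_ball[of z0 "1 / norm a"]]) (auto simp: V_def dist_norm norm_minus_commute)
  have holg: "g holomorphic_on UNIV"
    unfolding holomorphic_on_def using gder field_differentiable_at_within field_differentiable_def by blast
  have hol: "newton_map g holomorphic_on V"
  proof (rule holomorphic_transform[of "\<lambda>z. z - g z / (poly p z * exp (poly q z))"])
    show "(\<lambda>z. z - g z / (poly p z * exp (poly q z))) holomorphic_on V"
      using pV by (intro holomorphic_intros holomorphic_on_subset[OF holg]) auto
  qed (use nm in auto)
  have inv: "newton_map g ` V \<subseteq> V"
  proof clarify
    fix z assume z: "z \<in> V"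
    show "newton_map g z \<in> V" unfolding nm[OF z] using L_inv z V_def by auto
  qed
  have P: "V \<inter> newton_poles g = {}" using pV by (auto simp: newton_poles_def dg)
  have VF: "V \<subseteq> fatou_set (newton_map g) (newton_poles g)" by (rule fatou_sub[OF openV bddV hol inv P])
  obtain U where U: "connected U" "z0 \<in> U" "U \<subseteq> V" "ball (poly q z0) (1/13) \<subseteq> poly q ` U"
    using L_U V_def by auto
  have "U \<subseteq> immediate_basin (newton_map g) (newton_poles g) z0"
    unfolding immediate_basin_def by (rule connected_component_maximal) (use U VF in auto)
  then have "poly q ` U \<subseteq> poly q ` immediate_basin (newton_map g) (newton_poles g) z0" by (rule image_mono)
  then show ?thesis using U(4) by (rule subset_trans[rotated])
qed

end

lemma C1_real:
  fixes X S A B Q2t na :: real and e :: nat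
  assumes pos: "0 < A" "0 < B" "1 \<le> S" "S / 2 \<le> X" "X \<le> 2 * S" "0 \<le> Q2t"
    and b6: "X * Q2t \<le> B * X ^ e" and ba: "A * S ^ e \<le> na"
    and big: "100 * B * 2 ^ e \<le> A ^ 2 * X"
  shows "Q2t \<le> 1/100 * na ^ 2"
proof -
  have X0: "X > 0" using pos by linarith
  have Se: "S ^ e \<ge> 1" using pos by simp
  have XS: "X ^ e \<le> 2 ^ e * S ^ e" using pos by (metis power_mono power_mult_distrib less_imp_le X0)
  have "X * Q2t \<le> B * (2 ^ e * S ^ e)" using b6 XS pos by (smt (verit) mult_left_mono)
  also have "\<dots> = (100 * B * 2 ^ e) * S ^ e / 100" by simp
  also have "\<dots> \<le> (A ^ 2 * X) * S ^ e / 100" using big Se by (intro divide_right_mono mult_right_mono) auto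
  also have "\<dots> \<le> (A ^ 2 * X) * (S ^ e) ^ 2 / 100" using Se pos X0
    by (intro divide_right_mono mult_left_mono) (auto simp: power2_eq_square)
  also have "\<dots> = X * ((A * S ^ e) ^ 2 / 100)" by (simp add: power_mult_distrib)
  also have "\<dots> \<le> X * (na ^ 2 / 100)" using ba pos Se X0
    by (intro mult_left_mono divide_right_mono power_mono) auto
  finally have "X * Q2t \<le> X * (na ^ 2 / 100)" .
  then show ?thesis using X0 by simp
qed

lemma C3_real:
  fixes X Y S A B P1t Q1t Q2t Pt Ps Q1s na :: real and m e :: nat
  assumes pos: "0 < A" "0 < B" "1 \<le> S" "S / 2 \<le> X" "X \<le> 2 * S" "S / 2 \<le> Y" "Y \<le> 2 * S"
    and nn: "0 \<le> P1t" "0 \<le> Pt" "0 \<le> Q2t"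
    and b3: "X * P1t \<le> B * X ^ m" and b1: "Pt \<le> B * X ^ m" and b5: "A * X ^ e \<le> Q1t" and b4: "Q1t \<le> B * X ^ e"
    and b6: "X * Q2t \<le> B * X ^ e" and b2s: "A * Y ^ m \<le> Ps" and b4s: "Q1s \<le> B * Y ^ e" and b5s: "A * Y ^ e \<le> Q1s"
    and ba: "A * S ^ e \<le> na"
    and big: "200 * B ^ 3 * 4 ^ m * 4 ^ e \<le> A ^ 4 * X"
  shows "(P1t * Q1t + Pt * Q2t) / Q1t ^ 2 \<le> 1/100 * na * (Ps / Q1s)"
proof -
  have X0: "X > 0" and Y0: "Y > 0" using pos by linarith+
  define M where "M = X ^ m"
  define Mt where "Mt = Y ^ m"
  define E where "E = X ^ e"
  define Ey where "Ey = Y ^ e"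
  have M0: "M > 0" "Mt > 0" "E > 0" "Ey > 0" using X0 Y0 by (auto simp: M_def Mt_def E_def Ey_def)
  have Se: "S ^ e \<ge> 1" using pos by simp
  have MM: "M \<le> 4 ^ m * Mt"
  proof -
    have "X \<le> 4 * Y" using pos by linarith
    then have "X ^ m \<le> (4 * Y) ^ m" using X0 by (intro power_mono) auto
    then show ?thesis by (simp add: M_def Mt_def power_mult_distrib)
  qed
  have EE: "Ey \<le> 4 ^ e * E"
  proof -
    have "Y \<le> 4 * X" using pos by linarith
    then have "Y ^ e \<le> (4 * X) ^ e" using Y0 by (intro power_mono) auto
    then show ?thesis by (simp add: E_def Ey_def power_mult_distrib)
  qed
  have Q1t0: "Q1t > 0" using b5 pos M0 E_def by (smt (verit) mult_pos_pos)
  have Q1s0: "Q1s > 0" using b5s pos M0 Ey_def by (smt (verit) mult_pos_pos)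
  have s1: "X * (P1t * Q1t + Pt * Q2t) \<le> 2 * B ^ 2 * M * E"
  proof -
    have "(X * P1t) * Q1t \<le> (B * M) * (B * E)"
      by (rule mult_mono) (use b3 b4 Q1t0 pos M0 in \<open>auto simp: M_def E_def\<close>)
    moreover have "Pt * (X * Q2t) \<le> (B * M) * (B * E)"
      by (rule mult_mono) (use b1 b6 nn X0 pos M0 in \<open>auto simp: M_def E_def\<close>)
    ultimately show ?thesis by (simp add: algebra_simps power2_eq_square)
  qed
  have s2: "A ^ 2 * E ^ 2 \<le> Q1t ^ 2"
    using b5 pos M0 by (metis E_def less_imp_le mult_pos_pos power_mono power_mult_distrib)
  have "(P1t * Q1t + Pt * Q2t) / Q1t ^ 2 = X * (P1t * Q1t + Pt * Q2t) / (X * Q1t ^ 2)" using X0 by simp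
  also have "\<dots> \<le> (2 * B ^ 2 * M * E) / (X * (A ^ 2 * E ^ 2))"
    using s1 s2 X0 pos M0 by (intro frac_le mult_left_mono) (auto intro!: mult_pos_pos)
  also have "\<dots> = (2 * B ^ 2 * M) / (X * A ^ 2 * E)" using M0 by (simp add: power2_eq_square field_simps)
  also have "\<dots> \<le> (A ^ 2 * Mt) / (100 * B * 4 ^ e * E)"
  proof -
    have "(2 * B ^ 2 * M) * (100 * B * 4 ^ e) \<le> (2 * B ^ 2 * (4 ^ m * Mt)) * (100 * B * 4 ^ e)"
      using MM pos by (intro mult_right_mono mult_left_mono) auto
    also have "\<dots> = (200 * B ^ 3 * 4 ^ m * 4 ^ e) * Mt" by (simp add: power3_eq_cube power2_eq_square)
    also have "\<dots> \<le> (A ^ 4 * X) * Mt" using big M0 by (intro mult_right_mono) auto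
    also have "\<dots> = (A ^ 2 * Mt) * (X * A ^ 2)" by (simp add: power4_eq_xxxx power2_eq_square)
    finally have "(2 * B ^ 2 * M) * (100 * B * 4 ^ e) \<le> (A ^ 2 * Mt) * (X * A ^ 2)" .
    moreover have "X * A ^ 2 > 0" "100 * B * 4 ^ e > (0::real)" using X0 pos by auto
    ultimately have "(2 * B ^ 2 * M) / (X * A ^ 2) \<le> (A ^ 2 * Mt) / (100 * B * 4 ^ e)"
      by (simp add: divide_le_eq le_divide_eq mult.commute mult.left_commute)
    then have "(2 * B ^ 2 * M) / (X * A ^ 2) / E \<le> (A ^ 2 * Mt) / (100 * B * 4 ^ e) / E"
      using M0 by (intro divide_right_mono) auto
    then show ?thesis by (simp add: field_simps)
  qed
  also have "\<dots> \<le> 1/100 * (A * S ^ e) * ((A * Mt) / (B * Ey))"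
  proof -
    have "(A ^ 2 * Mt) / (100 * B * 4 ^ e * E) = 1/100 * A * ((A * Mt) / (B * (4 ^ e * E)))"
      by (simp add: power2_eq_square field_simps)
    also have "\<dots> \<le> 1/100 * A * ((A * Mt) / (B * Ey))"
      using EE M0 pos by (intro mult_left_mono divide_left_mono) auto
    also have "\<dots> \<le> 1/100 * (A * S ^ e) * ((A * Mt) / (B * Ey))"
      using Se pos M0 by (intro mult_right_mono mult_left_mono) auto
    finally show ?thesis .
  qed
  also have "\<dots> \<le> 1/100 * na * (Ps / Q1s)"
  proof (intro mult_mono)
    show "(A * Mt) / (B * Ey) \<le> Ps / Q1s"
    proof -
      have Ps0: "0 \<le> Ps" using b2s M0(2) pos unfolding Mt_def by (smt (verit) mult_pos_pos)
      show ?thesis using b2s b4s Q1s0 pos M0 Ps0 by (intro frac_le) (auto simp: Mt_def Ey_def)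
    qed
  qed (use ba pos M0 Se in \<open>auto intro: order_trans[OF _ ba]\<close>)
  finally show ?thesis .
qed

lemma asym:
  fixes p q :: "complex poly" and m d :: nat
  assumes dp: "degree p = m" and p0: "p \<noteq> 0" and dq: "degree q = d" and d1: "d \<ge> 1"
  shows "\<exists>R>0. \<forall>z0. R < norm z0 \<longrightarrow> poly (pderiv q) z0 \<noteq> 0 \<and>
    (\<forall>t. t \<in> cball z0 (2 / norm (poly (pderiv q) z0)) \<longrightarrow>
        norm (poly (pderiv (pderiv q)) t) \<le> 1/100 * norm (poly (pderiv q) z0) ^ 2 \<and>
        poly p t \<noteq> 0 \<and> poly (pderiv q) t \<noteq> 0) \<and>
    (\<forall>t s. t \<in> cball z0 (2 / norm (poly (pderiv q) z0)) \<longrightarrow> s \<in> cball z0 (2 / norm (poly (pderiv q) z0)) \<longrightarrow>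
      norm ((poly (pderiv p) t * poly (pderiv q) t - poly p t * poly (pderiv (pderiv q)) t) / (poly (pderiv q) t)^2)
        \<le> 1/100 * norm (poly (pderiv q) z0) * norm (poly p s / poly (pderiv q) s))"
proof -
  obtain e where de: "d = Suc e" using d1 by (cases d) auto
  have dQ1: "degree (pderiv q) = e" using dq de by (simp add: degree_pderiv)
  have Q10: "pderiv q \<noteq> 0" using dq de pderiv_eq_0_iff[of q] by auto
  obtain B1 where B1: "B1 > 0" "\<And>t. 1 \<le> norm t \<Longrightarrow> norm (poly p t) \<le> B1 * norm t ^ m"
    using poly_upper[of p m] dp by auto
  obtain A2 R2 where A2: "A2 > 0" "R2 \<ge> 1" "\<And>t. R2 \<le> norm t \<Longrightarrow> A2 * norm t ^ m \<le> norm (poly p t)"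
    using poly_lower[OF dp p0] by auto
  obtain B3 where B3: "B3 > 0" "\<And>t. 1 \<le> norm t \<Longrightarrow> norm t * norm (poly (pderiv p) t) \<le> B3 * norm t ^ m"
    using pderiv_upper[of p m] dp by auto
  obtain B4 where B4: "B4 > 0" "\<And>t. 1 \<le> norm t \<Longrightarrow> norm (poly (pderiv q) t) \<le> B4 * norm t ^ e"
    using poly_upper[of "pderiv q" e] dQ1 by auto
  obtain A5 R5 where A5: "A5 > 0" "R5 \<ge> 1" "\<And>t. R5 \<le> norm t \<Longrightarrow> A5 * norm t ^ e \<le> norm (poly (pderiv q) t)"
    using poly_lower[OF dQ1 Q10] by auto
  obtain B6 where B6: "B6 > 0" "\<And>t. 1 \<le> norm t \<Longrightarrow> norm t * norm (poly (pderiv (pderiv q)) t) \<le> B6 * norm t ^ e"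
    using pderiv_upper[of "pderiv q" e] dQ1 by auto
  define A where "A = min A2 A5"
  define B where "B = max (max B1 B3) (max B4 B6)"
  define R0 where "R0 = max R2 R5"
  have A0: "A > 0" and B0: "B > 0" and R01: "R0 \<ge> 1" using A2 A5 B1 B3 B4 B6 by (auto simp: A_def B_def R0_def)
  have f: "norm (poly p t) \<le> B * norm t ^ m \<and> A * norm t ^ m \<le> norm (poly p t) \<and>
      norm t * norm (poly (pderiv p) t) \<le> B * norm t ^ m \<and>
      norm (poly (pderiv q) t) \<le> B * norm t ^ e \<and> A * norm t ^ e \<le> norm (poly (pderiv q) t) \<and>
      norm t * norm (poly (pderiv (pderiv q)) t) \<le> B * norm t ^ e" if t: "R0 \<le> norm t" for t
  proof -
    have t1: "1 \<le> norm t" using t R01 by linarith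
    have pw: "norm t ^ k \<ge> 0" for k by simp
    have "B1 \<le> B" "B3 \<le> B" "B4 \<le> B" "B6 \<le> B" "A \<le> A2" "A \<le> A5" "R2 \<le> norm t" "R5 \<le> norm t"
      using t by (auto simp: A_def B_def R0_def)
    then show ?thesis
      using B1(2)[OF t1] A2(3)[of t] B3(2)[OF t1] B4(2)[OF t1] A5(3)[of t] B6(2)[OF t1] pw[of m] pw[of e]
      by (meson mult_right_mono order_trans)
  qed
  define R where "R = max (2 * R0) (max (4 / A) (max (2 * (100 * B * 2 ^ e / A ^ 2)) (2 * (200 * B ^ 3 * 4 ^ m * 4 ^ e / A ^ 4))))"
  have Rpos: "R > 0" unfolding R_def using R01 by auto
  have main: "poly (pderiv q) z0 \<noteq> 0 \<and>
    (\<forall>t. t \<in> cball z0 (2 / norm (poly (pderiv q) z0)) \<longrightarrow>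
        norm (poly (pderiv (pderiv q)) t) \<le> 1/100 * norm (poly (pderiv q) z0) ^ 2 \<and>
        poly p t \<noteq> 0 \<and> poly (pderiv q) t \<noteq> 0) \<and>
    (\<forall>t s. t \<in> cball z0 (2 / norm (poly (pderiv q) z0)) \<longrightarrow> s \<in> cball z0 (2 / norm (poly (pderiv q) z0)) \<longrightarrow>
      norm ((poly (pderiv p) t * poly (pderiv q) t - poly p t * poly (pderiv (pderiv q)) t) / (poly (pderiv q) t)^2)
        \<le> 1/100 * norm (poly (pderiv q) z0) * norm (poly p s / poly (pderiv q) s))"
    if z0: "R < norm z0" for z0
  proof -
    define S where "S = norm z0"
    define a where "a = poly (pderiv q) z0"
    have S1: "S \<ge> 2 * R0" "S \<ge> 4 / A" "S \<ge> 2 * (100 * B * 2 ^ e / A ^ 2)" "S \<ge> 2 * (200 * B ^ 3 * 4 ^ m * 4 ^ e / A ^ 4)"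
      using z0 by (auto simp: S_def R_def)
    have S1': "S \<ge> 1" using S1 R01 by linarith
    have Se: "S ^ e \<ge> 1" using S1' by simp
    have fz0: "A * S ^ e \<le> norm a" using f[of z0] S1 R01 by (simp add: S_def a_def)
    have "A * 1 \<le> A * S ^ e" using Se A0 by (intro mult_left_mono) auto
    then have na: "norm a \<ge> A" using fz0 by linarith
    have anz: "poly (pderiv q) z0 \<noteq> 0" using na A0 a_def by auto
    have ann: "S / 2 \<le> norm t \<and> norm t \<le> 2 * S \<and> R0 \<le> norm t" if t: "t \<in> cball z0 (2 / norm (poly (pderiv q) z0))" for t
    proof -
      have "norm (t - z0) \<le> 2 / norm a" using t by (simp add: a_def dist_norm norm_minus_commute)
      also have "\<dots> \<le> 2 / A" using na A0 by (intro divide_left_mono) (auto intro!: mult_pos_pos)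
      also have "\<dots> \<le> S / 2" using S1(2) A0 by (simp add: field_simps)
      finally have d: "norm (t - z0) \<le> S / 2" .
      have "S \<le> norm t + norm (t - z0)" unfolding S_def by (metis norm_triangle_sub add.commute norm_minus_commute)
      moreover have "norm t \<le> S + norm (t - z0)" unfolding S_def by (metis norm_triangle_sub add.commute)
      ultimately show ?thesis using d S1(1) by auto
    qed
    have P2: "\<forall>t. t \<in> cball z0 (2 / norm (poly (pderiv q) z0)) \<longrightarrow>
        norm (poly (pderiv (pderiv q)) t) \<le> 1/100 * norm (poly (pderiv q) z0) ^ 2 \<and>
        poly p t \<noteq> 0 \<and> poly (pderiv q) t \<noteq> 0"
    proof (intro allI impI)
      fix t assume t: "t \<in> cball z0 (2 / norm (poly (pderiv q) z0))"
      note at = ann[OF t]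
      note ft = f[of t, OF conjunct2[OF conjunct2[OF at]]]
      have big1: "100 * B * 2 ^ e \<le> A ^ 2 * norm t"
      proof -
        have "100 * B * 2 ^ e / A ^ 2 \<le> norm t" using S1(3) at by linarith
        then show ?thesis using A0 by (simp add: field_simps)
      qed
      have "norm (poly (pderiv (pderiv q)) t) \<le> 1/100 * norm a ^ 2"
        by (rule C1_real[of A B S "norm t"]) (use A0 B0 S1' at ft fz0 big1 in auto)
      moreover have "poly p t \<noteq> 0 \<and> poly (pderiv q) t \<noteq> 0"
      proof -
        have "norm t > 0" using at S1' by linarith
        then have "A * norm t ^ m > 0" "A * norm t ^ e > 0" using A0 by auto
        then show ?thesis using ft by auto
      qed
      ultimately show "norm (poly (pderiv (pderiv q)) t) \<le> 1/100 * norm (poly (pderiv q) z0) ^ 2 \<and>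
          poly p t \<noteq> 0 \<and> poly (pderiv q) t \<noteq> 0" by (simp add: a_def)
    qed
    have P3: "\<forall>t s. t \<in> cball z0 (2 / norm (poly (pderiv q) z0)) \<longrightarrow> s \<in> cball z0 (2 / norm (poly (pderiv q) z0)) \<longrightarrow>
      norm ((poly (pderiv p) t * poly (pderiv q) t - poly p t * poly (pderiv (pderiv q)) t) / (poly (pderiv q) t)^2)
        \<le> 1/100 * norm (poly (pderiv q) z0) * norm (poly p s / poly (pderiv q) s)"
    proof (intro allI impI)
      fix t s assume t: "t \<in> cball z0 (2 / norm (poly (pderiv q) z0))" and s: "s \<in> cball z0 (2 / norm (poly (pderiv q) z0))"
      note at = ann[OF t] and as = ann[OF s]
      note ft = f[of t, OF conjunct2[OF conjunct2[OF at]]]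
      note fs = f[of s, OF conjunct2[OF conjunct2[OF as]]]
      have big2: "200 * B ^ 3 * 4 ^ m * 4 ^ e \<le> A ^ 4 * norm t"
      proof -
        have "200 * B ^ 3 * 4 ^ m * 4 ^ e / A ^ 4 \<le> norm t" using S1(4) at by linarith
        then show ?thesis using A0 by (simp add: field_simps)
      qed
      have "norm ((poly (pderiv p) t * poly (pderiv q) t - poly p t * poly (pderiv (pderiv q)) t) / (poly (pderiv q) t)^2)
          \<le> (norm (poly (pderiv p) t) * norm (poly (pderiv q) t) + norm (poly p t) * norm (poly (pderiv (pderiv q)) t)) / norm (poly (pderiv q) t) ^ 2"
        unfolding norm_divide norm_power by (intro divide_right_mono) (auto simp: norm_mult intro: order_trans[OF norm_triangle_ineq4])
      also have "\<dots> \<le> 1/100 * norm a * (norm (poly p s) / norm (poly (pderiv q) s))"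
        by (rule C3_real[of A B S "norm t" "norm s"]) (use A0 B0 S1' at as ft fs fz0 big2 in auto)
      finally show "norm ((poly (pderiv p) t * poly (pderiv q) t - poly p t * poly (pderiv (pderiv q)) t) / (poly (pderiv q) t)^2)
          \<le> 1/100 * norm (poly (pderiv q) z0) * norm (poly p s / poly (pderiv q) s)"
        by (simp add: a_def norm_divide)
    qed
    show ?thesis using anz P2 P3 by blast
  qed
  show ?thesis using Rpos main by blast
qed


theorem corollary7p6:
  fixes p q :: "complex poly" and m d :: nat and c :: complex
    and g :: "complex \<Rightarrow> complex"
  assumes "degree p = m" and "lead_coeff p = of_nat d"
    and "degree q = d" and "d \<ge> 1" and "lead_coeff q = 1"
    and g_def: "\<And>z. g z = contour_integral (linepath 0 z) (\<lambda>t. poly p t * exp (poly q t)) + c"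
    and not_pexp: "\<not> (\<exists>pt qt :: complex poly. \<forall>z. g z = poly pt z * exp (poly qt z))"
    and free_crit: "\<And>w. deriv (deriv g) w = 0 \<Longrightarrow> g w \<noteq> 0 \<Longrightarrow> deriv g w \<noteq> 0 \<Longrightarrow>
                   attracted_by_cycle (newton_map g) (newton_poles g) w"
  shows "\<exists>\<rho>>0. \<forall>z0. g z0 = 0 \<and> deriv g z0 \<noteq> 0 \<and> norm z0 > \<rho> \<longrightarrow>
           ball (poly q z0) (1/13) \<subseteq> poly q ` immediate_basin (newton_map g) (newton_poles g) z0"
proof -
  have p0: "p \<noteq> 0" using assms(2) assms(4) by auto
  have gfun: "g = (\<lambda>z. contour_integral (linepath 0 z) (\<lambda>t. poly p t * exp (poly q t)) + c)"
    using g_def by auto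
  have hol: "(\<lambda>t. poly p t * exp (poly q t)) holomorphic_on UNIV"
    by (intro holomorphic_intros)
  have gder: "(g has_field_derivative poly p z * exp (poly q z)) (at z)" for z
    unfolding gfun using DERIV_add[OF prim_deriv[OF hol, of z] DERIV_const[of c]] by simp
  obtain R where R: "R > 0" and RR: "\<And>z0. R < norm z0 \<Longrightarrow> poly (pderiv q) z0 \<noteq> 0 \<and>
    (\<forall>t. t \<in> cball z0 (2 / norm (poly (pderiv q) z0)) \<longrightarrow>
        norm (poly (pderiv (pderiv q)) t) \<le> 1/100 * norm (poly (pderiv q) z0) ^ 2 \<and>
        poly p t \<noteq> 0 \<and> poly (pderiv q) t \<noteq> 0) \<and>
    (\<forall>t s. t \<in> cball z0 (2 / norm (poly (pderiv q) z0)) \<longrightarrow> s \<in> cball z0 (2 / norm (poly (pderiv q) z0)) \<longrightarrow>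
      norm ((poly (pderiv p) t * poly (pderiv q) t - poly p t * poly (pderiv (pderiv q)) t) / (poly (pderiv q) t)^2)
        \<le> 1/100 * norm (poly (pderiv q) z0) * norm (poly p s / poly (pderiv q) s))"
    using asym[OF assms(1) p0 assms(3) assms(4)] by blast
  show ?thesis
  proof (intro exI[of _ R] conjI allI impI)
    show "R > 0" by (rule R)
    fix z0 assume z0: "g z0 = 0 \<and> deriv g z0 \<noteq> 0 \<and> R < norm z0"
    have zz: "R < norm z0" using z0 by auto
    have anz: "poly (pderiv q) z0 \<noteq> 0" using RR[OF zz] by blast
    have P2: "\<forall>t. t \<in> cball z0 (2 / norm (poly (pderiv q) z0)) \<longrightarrow>
        norm (poly (pderiv (pderiv q)) t) \<le> 1/100 * norm (poly (pderiv q) z0) ^ 2 \<and>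
        poly p t \<noteq> 0 \<and> poly (pderiv q) t \<noteq> 0" using RR[OF zz] by blast
    have P3: "\<forall>t s. t \<in> cball z0 (2 / norm (poly (pderiv q) z0)) \<longrightarrow> s \<in> cball z0 (2 / norm (poly (pderiv q) z0)) \<longrightarrow>
      norm ((poly (pderiv p) t * poly (pderiv q) t - poly p t * poly (pderiv (pderiv q)) t) / (poly (pderiv q) t)^2)
        \<le> 1/100 * norm (poly (pderiv q) z0) * norm (poly p s / poly (pderiv q) s)" using RR[OF zz] by blast
    have C1: "\<And>t. t \<in> cball z0 (2 / norm (poly (pderiv q) z0)) \<Longrightarrow>
        norm (poly (pderiv (pderiv q)) t) \<le> 1/100 * norm (poly (pderiv q) z0) ^ 2" using P2 by blast
    have C2: "\<And>t. t \<in> cball z0 (2 / norm (poly (pderiv q) z0)) \<Longrightarrow>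
        poly p t \<noteq> 0 \<and> poly (pderiv q) t \<noteq> 0" using P2 by blast
    have C3: "\<And>t s. t \<in> cball z0 (2 / norm (poly (pderiv q) z0)) \<Longrightarrow> s \<in> cball z0 (2 / norm (poly (pderiv q) z0)) \<Longrightarrow>
      norm ((poly (pderiv p) t * poly (pderiv q) t - poly p t * poly (pderiv (pderiv q)) t) / (poly (pderiv q) t)^2)
        \<le> 1/100 * norm (poly (pderiv q) z0) * norm (poly p s / poly (pderiv q) s)" using P3 by blast
    have gz0: "g z0 = 0" using z0 by blast
    show "ball (poly q z0) (1/13) \<subseteq> poly q ` immediate_basin (newton_map g) (newton_poles g) z0"
      by (rule key[OF gder gz0 refl anz C1 C2 C3])
  qed
qed

end
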